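(* Let $\xi>0$, $f\in\mathcal{C}^{\rm Step}(\xi)$, and let $\Gamma$ be the set of points of discontinuity of $f$. Then for every $u\in\mathbb{R}\setminus\Gamma$, \[ \lim_{\delta\searrow0}\mathbb{P}^{\rm BM}_u\bigl(\tau_v\ge f^{+,\delta}(v)-f(u)\ \forall v\in\mathbb{R}\bigr)=\mathbb{P}^{\rm BM}_u\bigl(\tau_v\ge f(v)-f(u)\ \forall v\in\mathbb{R}\bigr). \]
   Context: For $u\in\mathbb{R}$, $\mathbb{P}^{\rm BM}_u$ is the law of one-dimensional Brownian motion $(B_t)$ started at $u$, and $\tau_v:=\inf\{t\ge0:B_t=v\}$. For $\xi>0$, $\mathcal{C}(\xi)$ is the set of functions $f:\mathbb{R}\to[0,\infty)$ that are non-increasing on $(-\infty,0]$, non-decreasing on $[0,\infty)$, with $\lim_{x\to0}f(x)=0$, $\sup_{\mathbb{R}}f\le\xi$ and $\lim_{x\to\infty}f(x)=\xi$; $\mathcal{C}^{\rm Step}(\xi)$ is the set of step functions (piecewise constant with finitely many points of discontinuity) in $\mathcal{C}(\xi)$. For $\delta>0$, $f^{+,\delta}(u):=\sup_{w\in[u-\delta,u+\delta]}f(w)$. *)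

theory Defs
  imports "HOL-Probability.Probability"
begin

definition is_BM :: "'a measure \<Rightarrow> real \<Rightarrow> (real \<Rightarrow> 'a \<Rightarrow> real) \<Rightarrow> bool" where
  "is_BM M u B \<longleftrightarrow>
     prob_space M \<and>
     (\<forall>t. B t \<in> borel_measurable M) \<and>
     (\<forall>\<omega>\<in>space M. B 0 \<omega> = u \<and> continuous_on {0..} (\<lambda>t. B t \<omega>)) \<and>
     (\<forall>s t. 0 \<le> s \<and> s < t \<longrightarrow>
        distributed M lborel (\<lambda>\<omega>. B t \<omega> - B s \<omega>)
          (\<lambda>x. ennreal (normal_density 0 (sqrt (t - s)) x))) \<and>
     (\<forall>ts::real list. sorted_wrt (<) ts \<and> (\<forall>t\<in>set ts. 0 \<le> t) \<longrightarrow>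
        prob_space.indep_vars M (\<lambda>_. borel)
          (\<lambda>i \<omega>. B (ts ! Suc i) \<omega> - B (ts ! i) \<omega>) {..<length ts - 1})"

text \<open>Hitting time tau_v = inf {t \<ge> 0. B_t = v}, with inf of the empty set = \<infinity>.\<close>
definition hitting_time :: "(real \<Rightarrow> 'a \<Rightarrow> real) \<Rightarrow> real \<Rightarrow> 'a \<Rightarrow> ereal" where
  "hitting_time B v \<omega> = (INF t\<in>{t. 0 \<le> t \<and> B t \<omega> = v}. ereal t)"

definition class_C :: "real \<Rightarrow> (real \<Rightarrow> real) \<Rightarrow> bool" where
  "class_C \<xi> f \<longleftrightarrow>
     (\<forall>x. 0 \<le> f x) \<and>
     antimono_on {..0} f \<and> mono_on {0..} f \<and>
     (f \<longlongrightarrow> 0) (at 0) \<and>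
     (\<forall>x. f x \<le> \<xi>) \<and>
     (f \<longlongrightarrow> \<xi>) at_top"

definition step_fun :: "(real \<Rightarrow> real) \<Rightarrow> bool" where
  "step_fun f \<longleftrightarrow> (\<exists>S. finite S \<and>
     (\<forall>x. x \<notin> S \<longrightarrow> (\<exists>e>0. \<forall>y. \<bar>y - x\<bar> < e \<longrightarrow> f y = f x)))"

definition class_C_step :: "real \<Rightarrow> (real \<Rightarrow> real) \<Rightarrow> bool" where
  "class_C_step \<xi> f \<longleftrightarrow> class_C \<xi> f \<and> step_fun f"

definition fplus :: "(real \<Rightarrow> real) \<Rightarrow> real \<Rightarrow> real \<Rightarrow> real" where
  "fplus f \<delta> u = (SUP w\<in>{u - \<delta>..u + \<delta>}. f w)"

end

theory Submission
  imports Defs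
begin

definition supp :: "(real \<Rightarrow> real) \<Rightarrow> real \<Rightarrow> real \<Rightarrow> real" where
  "supp p a b = Sup (p ` {a..b})"

definition grid :: "real \<Rightarrow> real \<Rightarrow> nat \<Rightarrow> nat \<Rightarrow> real" where
  "grid a b n k = a + (b - a) * real k / real (Suc n)"

definition gmax :: "(real \<Rightarrow> real) \<Rightarrow> real \<Rightarrow> real \<Rightarrow> nat \<Rightarrow> real" where
  "gmax p a b n = Max ((\<lambda>k. p (grid a b n k)) ` {0..Suc n})"

lemma supp_attained:
  assumes "a \<le> b" "continuous_on {a..b} p"
  shows "\<exists>t\<in>{a..b}. supp p a b = p t \<and> (\<forall>s\<in>{a..b}. p s \<le> p t)"
proof -
  obtain t where t: "t \<in> {a..b}" "\<forall>s\<in>{a..b}. p s \<le> p t"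
    using continuous_attains_sup[of "{a..b}" p] assms by auto
  have "supp p a b = p t" unfolding supp_def
    using t by (intro cSup_eq_maximum) auto
  thus ?thesis using t by auto
qed

lemma supp_upper:
  assumes "a \<le> b" "continuous_on {a..b} p" "s \<in> {a..b}"
  shows "p s \<le> supp p a b"
  using supp_attained[OF assms(1,2)] assms(3) by auto

lemma grid_in:
  assumes "a \<le> b" "k \<le> Suc n"
  shows "grid a b n k \<in> {a..b}"
proof -
  have "real k / real (Suc n) \<le> 1" using assms by (simp add: divide_le_eq_1)
  hence "(b - a) * (real k / real (Suc n)) \<le> (b - a) * 1"
    using assms by (intro mult_left_mono) auto
  thus ?thesis using assms unfolding grid_def by auto
qed

lemma gmax_le_supp:
  assumes "a \<le> b" "continuous_on {a..b} p"
  shows "gmax p a b n \<le> supp p a b"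
  unfolding gmax_def using grid_in[OF assms(1)] supp_upper[OF assms]
  by (subst Max_le_iff) auto

lemma gmax_ge:
  assumes "k \<le> Suc n"
  shows "p (grid a b n k) \<le> gmax p a b n"
  unfolding gmax_def using assms by (intro Max_ge) auto

lemma gmax_tendsto:
  assumes "a < b" "continuous_on {a..b} p"
  shows "(\<lambda>n. gmax p a b n) \<longlonglongrightarrow> supp p a b"
proof -
  obtain t where t: "t \<in> {a..b}" "supp p a b = p t"
    using supp_attained[of a b p] assms by auto
  define k where "k n = nat \<lfloor>(t - a) * real (Suc n) / (b - a)\<rfloor>" for n
  have kle: "k n \<le> Suc n" for n
  proof -
    have "(t - a) * real (Suc n) / (b - a) \<le> real (Suc n)"
      using t assms by (simp add: divide_le_eq mult.commute mult_left_mono)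
    hence "\<lfloor>(t - a) * real (Suc n) / (b - a)\<rfloor> \<le> int (Suc n)"
      by (simp add: floor_le_iff)
    thus ?thesis unfolding k_def by (simp add: nat_le_iff)
  qed
  have gk: "grid a b n (k n) \<le> t \<and> t - (b - a) / real (Suc n) \<le> grid a b n (k n)" for n
  proof -
    define x where "x = (t - a) * real (Suc n) / (b - a)"
    have x0: "x \<ge> 0" using t assms unfolding x_def by auto
    have kx: "real (k n) \<le> x" "x < real (k n) + 1" unfolding k_def x_def[symmetric]
      using x0 by linarith+
    have eq: "grid a b n (k n) = a + (b - a) / real (Suc n) * real (k n)"
      unfolding grid_def by simp
    have t_eq: "t = a + (b - a) / real (Suc n) * x" unfolding x_def using assms by simp
    define c where "c = (b - a) / real (Suc n)"
    have pos: "c > 0" using assms unfolding c_def by simp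
    have m1: "c * real (k n) \<le> c * x" using kx pos by (intro mult_left_mono) auto
    have m2: "c * x \<le> c * (real (k n) + 1)" using kx pos by (intro mult_left_mono) auto
    show ?thesis unfolding eq c_def[symmetric] using m1 m2 t_eq[folded c_def]
      by (simp add: algebra_simps)
  qed
  have gt: "(\<lambda>n. grid a b n (k n)) \<longlonglongrightarrow> t"
  proof (rule real_tendsto_sandwich[where f="\<lambda>n. t - (b - a) / real (Suc n)" and h="\<lambda>n. t"])
    show "\<forall>\<^sub>F n in sequentially. t - (b - a) / real (Suc n) \<le> grid a b n (k n)" using gk by auto
    show "\<forall>\<^sub>F n in sequentially. grid a b n (k n) \<le> t" using gk by auto
    have "(\<lambda>n. (b - a) / real (Suc n)) \<longlonglongrightarrow> 0"
      using LIMSEQ_Suc[OF lim_const_over_n[of "b - a"]] by simp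
    thus "(\<lambda>n. t - (b - a) / real (Suc n)) \<longlonglongrightarrow> t"
      using tendsto_diff[OF tendsto_const, of _ 0 sequentially t] by simp
  qed auto
  have pt: "(\<lambda>n. p (grid a b n (k n))) \<longlonglongrightarrow> p t"
    using continuous_on_tendsto_compose[OF assms(2) gt] t grid_in[OF _ kle] assms by auto
  show ?thesis
  proof (rule real_tendsto_sandwich[where f="\<lambda>n. p (grid a b n (k n))" and h="\<lambda>n. supp p a b"])
    show "\<forall>\<^sub>F n in sequentially. p (grid a b n (k n)) \<le> gmax p a b n"
      using gmax_ge[OF kle] by auto
    show "\<forall>\<^sub>F n in sequentially. gmax p a b n \<le> supp p a b"
      using gmax_le_supp assms by auto
  qed (use pt t in auto)
qed

lemma normal_density_le:
  assumes "\<sigma> > 0"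
  shows "normal_density 0 \<sigma> x \<le> 1 / sqrt (2 * pi * \<sigma>\<^sup>2)"
proof -
  have "exp (-(x - 0)\<^sup>2 / (2 * \<sigma>\<^sup>2)) \<le> 1" using assms by simp
  hence "1 / sqrt (2 * pi * \<sigma>\<^sup>2) * exp (-(x - 0)\<^sup>2 / (2 * \<sigma>\<^sup>2)) \<le> 1 / sqrt (2 * pi * \<sigma>\<^sup>2) * 1"
    by (intro mult_left_mono) auto
  thus ?thesis unfolding normal_density_def by simp
qed

lemma (in prob_space) sum_indep_interval:
  fixes X Y :: "'a \<Rightarrow> real"
  assumes ind: "indep_var borel X borel Y"
    and dX: "distributed M lborel X (\<lambda>x. ennreal (normal_density 0 \<sigma> x))"
    and sp: "\<sigma> > 0" and ep: "\<epsilon> \<ge> 0"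
  shows "prob {\<omega>\<in>space M. X \<omega> + Y \<omega> \<in> {a - \<epsilon><..a}} \<le> \<epsilon> / sqrt (2 * pi * \<sigma>\<^sup>2)"
proof -
  define C where "C = 1 / sqrt (2 * pi * \<sigma>\<^sup>2)"
  have C0: "C \<ge> 0" unfolding C_def by simp
  have rvX[measurable]: "X \<in> borel_measurable M" using ind by (auto dest: indep_var_rv1)
  have rvY[measurable]: "Y \<in> borel_measurable M" using ind by (auto dest: indep_var_rv2)
  define PX where "PX = distr M borel X"
  define PY where "PY = distr M borel Y"
  have eq: "PX \<Otimes>\<^sub>M PY = distr M (borel \<Otimes>\<^sub>M borel) (\<lambda>x. (X x, Y x))"
    using ind unfolding indep_var_distribution_eq PX_def PY_def by auto
  interpret P: pair_prob_space PX PY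
    unfolding PX_def PY_def
    by (simp add: pair_prob_space_def pair_sigma_finite_def prob_space_distr
        prob_space_imp_sigma_finite)
  define A where "A = {p::real \<times> real. fst p + snd p \<in> {a - \<epsilon><..a}}"
  have "{p \<in> space (borel \<Otimes>\<^sub>M borel). fst p + snd p \<in> {a - \<epsilon><..(a::real)}} \<in> sets (borel \<Otimes>\<^sub>M borel)"
    by measurable
  moreover have "A = {p \<in> space (borel \<Otimes>\<^sub>M borel). fst p + snd p \<in> {a - \<epsilon><..(a::real)}}"
    by (auto simp: A_def space_pair_measure)
  ultimately have A[measurable]: "A \<in> sets (borel \<Otimes>\<^sub>M borel)" by metis
  have "emeasure M {\<omega>\<in>space M. X \<omega> + Y \<omega> \<in> {a - \<epsilon><..a}}
      = emeasure (distr M (borel \<Otimes>\<^sub>M borel) (\<lambda>x. (X x, Y x))) A"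
    by (subst emeasure_distr[OF _ A], measurable) (auto simp: A_def intro!: arg_cong[where f="emeasure M"])
  also have "\<dots> = emeasure (PX \<Otimes>\<^sub>M PY) A" using eq by simp
  also have "\<dots> = (\<integral>\<^sup>+y. emeasure PX ((\<lambda>x. (x, y)) -` A) \<partial>PY)"
    by (rule P.emeasure_pair_measure_alt2) (simp add: PX_def PY_def A)
  also have "\<dots> \<le> (\<integral>\<^sup>+y. ennreal (C * \<epsilon>) \<partial>PY)"
  proof (rule nn_integral_mono)
    fix y
    define J where "J = {a - \<epsilon> - y<..a - y}"
    have J[measurable]: "J \<in> sets borel" unfolding J_def by simp
    have "(\<lambda>x. (x, y)) -` A = J" unfolding A_def J_def by auto
    hence "emeasure PX ((\<lambda>x. (x, y)) -` A) = emeasure (distr M lborel X) J"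
      unfolding PX_def by (simp add: emeasure_distr)
    also have "\<dots> = emeasure (density lborel (\<lambda>x. ennreal (normal_density 0 \<sigma> x))) J"
      using distributed_distr_eq_density[OF dX] by simp
    also have "\<dots> = (\<integral>\<^sup>+x. ennreal (normal_density 0 \<sigma> x) * indicator J x \<partial>lborel)"
      by (rule emeasure_density) auto
    also have "\<dots> \<le> (\<integral>\<^sup>+x. ennreal C * indicator J x \<partial>lborel)"
      by (intro nn_integral_mono mult_right_mono)
         (auto simp: C_def normal_density_le[OF sp])
    also have "\<dots> = ennreal C * emeasure lborel J"
      by (simp add: nn_integral_cmult_indicator)
    also have "\<dots> = ennreal (C * \<epsilon>)"
      unfolding J_def using ep C0 by (simp add: ennreal_mult)
    finally show "emeasure PX ((\<lambda>x. (x, y)) -` A) \<le> ennreal (C * \<epsilon>)" .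
  qed
  also have "\<dots> = ennreal (C * \<epsilon>)"
    using P.M2.emeasure_space_1 by simp
  finally have "emeasure M {\<omega>\<in>space M. X \<omega> + Y \<omega> \<in> {a - \<epsilon><..a}} \<le> ennreal (C * \<epsilon>)" .
  hence "prob {\<omega>\<in>space M. X \<omega> + Y \<omega> \<in> {a - \<epsilon><..a}} \<le> C * \<epsilon>"
    using C0 ep by (simp add: emeasure_eq_measure ennreal_le_iff)
  thus ?thesis unfolding C_def by simp
qed

lemma BM_prob: "is_BM M u B \<Longrightarrow> prob_space M" by (simp add: is_BM_def)
lemma BM_meas: "is_BM M u B \<Longrightarrow> B t \<in> borel_measurable M" by (simp add: is_BM_def)
lemma BM_0: "is_BM M u B \<Longrightarrow> \<omega> \<in> space M \<Longrightarrow> B 0 \<omega> = u" by (simp add: is_BM_def)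
lemma BM_cont: "is_BM M u B \<Longrightarrow> \<omega> \<in> space M \<Longrightarrow> continuous_on {0..} (\<lambda>t. B t \<omega>)"
  by (simp add: is_BM_def)
lemma BM_cont': "is_BM M u B \<Longrightarrow> \<omega> \<in> space M \<Longrightarrow> 0 \<le> a \<Longrightarrow> continuous_on {a..b} (\<lambda>t. B t \<omega>)"
  by (rule continuous_on_subset[OF BM_cont]) auto
lemma BM_incr: "is_BM M u B \<Longrightarrow> 0 \<le> s \<Longrightarrow> s < t \<Longrightarrow>
   distributed M lborel (\<lambda>\<omega>. B t \<omega> - B s \<omega>) (\<lambda>x. ennreal (normal_density 0 (sqrt (t - s)) x))"
  by (simp add: is_BM_def)
lemma BM_indep: "is_BM M u B \<Longrightarrow> sorted_wrt (<) ts \<Longrightarrow> (\<forall>t\<in>set ts. 0 \<le> t) \<Longrightarrow>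
   prob_space.indep_vars M (\<lambda>_. borel) (\<lambda>i \<omega>. B (ts ! Suc i) \<omega> - B (ts ! i) \<omega>) {..<length ts - 1}"
  by (simp add: is_BM_def)

lemma neg_BM:
  assumes "is_BM M u B"
  shows "is_BM M (-u) (\<lambda>t \<omega>. - B t \<omega>)"
proof -
  interpret prob_space M using BM_prob[OF assms] .
  have d: "distributed M lborel (\<lambda>\<omega>. - B t \<omega> - - B s \<omega>) (\<lambda>x. ennreal (normal_density 0 (sqrt (t - s)) x))"
    if "0 \<le> s" "s < t" for s t
  proof -
    have "distributed M lborel (\<lambda>\<omega>. 0 + (-1) * (B t \<omega> - B s \<omega>))
      (normal_density (0 + (-1) * 0) (\<bar>-1\<bar> * sqrt (t - s)))"
      by (rule normal_density_affine[OF BM_incr[OF assms that]]) (use that in auto)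
    thus ?thesis by simp
  qed
  have i: "indep_vars (\<lambda>_. borel) (\<lambda>i \<omega>. - B (ts ! Suc i) \<omega> - - B (ts ! i) \<omega>) {..<length ts - 1}"
    if "sorted_wrt (<) ts" "\<forall>t\<in>set ts. 0 \<le> t" for ts
  proof -
    have "indep_vars (\<lambda>_. borel) (\<lambda>i \<omega>. (\<lambda>x. - x) (B (ts ! Suc i) \<omega> - B (ts ! i) \<omega>)) {..<length ts - 1}"
      by (rule indep_vars_compose2[OF BM_indep[OF assms that]]) auto
    thus ?thesis by simp
  qed
  have c: "\<forall>\<omega>\<in>space M. - B 0 \<omega> = - u \<and> continuous_on {0..} (\<lambda>t. - B t \<omega>)"
    using BM_0[OF assms] BM_cont[OF assms] by (auto intro: continuous_on_minus)
  have m: "\<forall>t. (\<lambda>\<omega>. - B t \<omega>) \<in> borel_measurable M" using borel_measurable_uminus[OF BM_meas[OF assms]] by auto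
  show ?thesis
    unfolding is_BM_def
    apply (intro conjI)
    subgoal by (rule prob_space_axioms)
    subgoal by (rule m)
    subgoal by (rule c)
    subgoal using d by blast
    subgoal using i by blast
    done
qed

lemma supp_meas:
  assumes "is_BM M u B" "0 \<le> a" "a \<le> b"
  shows "(\<lambda>\<omega>. supp (\<lambda>t. B t \<omega>) a b) \<in> borel_measurable M"
proof (cases "a = b")
  case True
  have "supp (\<lambda>t. B t \<omega>) a b = B a \<omega>" for \<omega> unfolding supp_def True by simp
  thus ?thesis using BM_meas[OF assms(1)] by simp
next
  case False
  hence ab: "a < b" using assms by simp
  show ?thesis
  proof (rule borel_measurable_LIMSEQ_real)
    fix \<omega> assume "\<omega> \<in> space M"
    thus "(\<lambda>n. gmax (\<lambda>t. B t \<omega>) a b n) \<longlonglongrightarrow> supp (\<lambda>t. B t \<omega>) a b"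
      using gmax_tendsto[OF ab BM_cont'[OF assms(1) _ assms(2)]] by blast
  next
    fix n
    show "(\<lambda>\<omega>. gmax (\<lambda>t. B t \<omega>) a b n) \<in> borel_measurable M"
    proof -
      have [measurable]: "\<And>t. B t \<in> borel_measurable M" using BM_meas[OF assms(1)] .
      show ?thesis unfolding gmax_def by measurable
    qed
  qed
qed

lemma grid_mono: "a < b \<Longrightarrow> i < j \<Longrightarrow> grid a b n i < grid a b n j"
  unfolding grid_def by (simp add: divide_strict_right_mono)

lemma grid_ge: "a \<le> b \<Longrightarrow> a \<le> grid a b n i"
  unfolding grid_def by simp

lemma gmax_bound:
  assumes BM: "is_BM M u B" and r: "0 < r" "r < s" and ep: "\<epsilon> \<ge> 0"
  shows "measure M {\<omega>\<in>space M. gmax (\<lambda>t. B t \<omega>) r s n \<in> {\<gamma> - \<epsilon><..\<gamma>}} \<le> \<epsilon> / sqrt (2 * pi * r)"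
proof -
  interpret prob_space M using BM_prob[OF BM] .
  define g where "g = grid r s n"
  have gmono: "i < j \<Longrightarrow> g i < g j" for i j unfolding g_def using grid_mono r by auto
  have g0: "g 0 = r" unfolding g_def grid_def by simp
  have gpos: "g k > 0" for k using grid_ge[of r s n k] r unfolding g_def by auto
  define ts where "ts = 0 # map g [0..<n+2]"
  have len: "length ts = n + 3" unfolding ts_def by simp
  have ts0: "ts ! 0 = 0" unfolding ts_def by simp
  have tsS: "k < n + 2 \<Longrightarrow> ts ! Suc k = g k" for k unfolding ts_def by (simp del: upt_Suc)
  have sorted: "sorted_wrt (<) ts"
    unfolding sorted_wrt_iff_nth_less len
  proof (intro allI impI)
    fix i j :: nat assume ij: "i < j" "j < n + 3"
    then obtain j' where j': "j = Suc j'" by (cases j) auto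
    show "ts ! i < ts ! j"
    proof (cases i)
      case 0 thus ?thesis using ts0 tsS[of j'] gpos[of j'] j' ij by auto
    next
      case (Suc i') thus ?thesis using tsS[of j'] tsS[of i'] gmono[of i' j'] j' ij by auto
    qed
  qed
  have nonneg: "\<forall>t\<in>set ts. 0 \<le> t" unfolding ts_def using gpos by (auto intro: less_imp_le)
  define incr where "incr i \<omega> = B (ts ! Suc i) \<omega> - B (ts ! i) \<omega>" for i \<omega>
  have ind: "indep_vars (\<lambda>_. borel) incr {..<n+2}"
    using BM_indep[OF BM sorted nonneg] unfolding incr_def len by simp
  have ind2: "indep_var (PiM {0} (\<lambda>_. borel)) (\<lambda>\<omega>. restrict (\<lambda>i. incr i \<omega>) {0})
      (PiM {1..<n+2} (\<lambda>_. borel)) (\<lambda>\<omega>. restrict (\<lambda>i. incr i \<omega>) {1..<n+2})"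
    by (rule indep_var_restrict[OF ind]) auto
  define F where "F z = Max ((\<lambda>k. \<Sum>i<k. z (Suc i)) ` {0..Suc n})" for z :: "nat \<Rightarrow> real"
  have Fm: "F \<in> borel_measurable (PiM {1..<n+2} (\<lambda>_. borel))"
    unfolding F_def
  proof (rule borel_measurable_Max)
    fix k assume k: "k \<in> {0..Suc n}"
    have m: "i \<in> {..<k} \<Longrightarrow> (\<lambda>z. z (Suc i)) \<in> borel_measurable (Pi\<^sub>M {1..<n + 2} (\<lambda>_. (borel::real measure)))" for i
      using k by (intro measurable_component_singleton) auto
    show "(\<lambda>z. \<Sum>i<k. z (Suc i)) \<in> borel_measurable (PiM {1..<n+2} (\<lambda>_. (borel::real measure)))"
      using borel_measurable_sum[of "{..<k}" "\<lambda>i z. z (Suc i)", OF m] by simp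
  qed simp
  have ind3: "indep_var borel ((\<lambda>z. z 0) \<circ> (\<lambda>\<omega>. restrict (\<lambda>i. incr i \<omega>) {0}))
     borel (F \<circ> (\<lambda>\<omega>. restrict (\<lambda>i. incr i \<omega>) {1..<n+2}))"
    by (rule indep_var_compose[OF ind2 _ Fm]) (rule measurable_component_singleton, simp)
  define X where "X \<omega> = B r \<omega> - B 0 \<omega>" for \<omega>
  define Y where "Y \<omega> = Max ((\<lambda>k. \<Sum>i<k. incr (Suc i) \<omega>) ` {0..Suc n})" for \<omega>
  have eX: "(\<lambda>z. z 0) \<circ> (\<lambda>\<omega>. restrict (\<lambda>i. incr i \<omega>) {0}) = X"
    by (rule ext) (simp add: X_def incr_def ts0 tsS g0)
  have eY: "F \<circ> (\<lambda>\<omega>. restrict (\<lambda>i. incr i \<omega>) {1..<n+2}) = Y"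
  proof (rule ext)
    fix \<omega>
    have "(\<lambda>k. \<Sum>i<k. restrict (\<lambda>i. incr i \<omega>) {1..<n+2} (Suc i)) ` {0..Suc n}
        = (\<lambda>k. \<Sum>i<k. incr (Suc i) \<omega>) ` {0..Suc n}"
      by (intro image_cong refl sum.cong) auto
    thus "(F \<circ> (\<lambda>\<omega>. restrict (\<lambda>i. incr i \<omega>) {1..<n+2})) \<omega> = Y \<omega>"
      by (simp add: F_def Y_def)
  qed
  have indXY: "indep_var borel X borel Y" using ind3 unfolding eX eY .
  have dX: "distributed M lborel X (\<lambda>x. ennreal (normal_density 0 (sqrt r) x))"
    using BM_incr[OF BM order_refl r(1)] unfolding X_def by simp
  have Yeq: "Y \<omega> = Max ((\<lambda>k. B (g k) \<omega> - B r \<omega>) ` {0..Suc n})" for \<omega>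
  proof -
    have "(\<lambda>k. \<Sum>i<k. incr (Suc i) \<omega>) ` {0..Suc n} = (\<lambda>k. B (g k) \<omega> - B r \<omega>) ` {0..Suc n}"
    proof (intro image_cong refl)
      fix k assume k: "k \<in> {0..Suc n}"
      have "(\<Sum>i<k. incr (Suc i) \<omega>) = (\<Sum>i<k. B (g (Suc i)) \<omega> - B (g i) \<omega>)"
        by (intro sum.cong refl) (use k in \<open>simp add: incr_def tsS\<close>)
      also have "\<dots> = B (g k) \<omega> - B (g 0) \<omega>"
        by (rule sum_lessThan_telescope[where f="\<lambda>i. B (g i) \<omega>"])
      finally show "(\<Sum>i<k. incr (Suc i) \<omega>) = B (g k) \<omega> - B r \<omega>" by (simp add: g0)
    qed
    thus ?thesis by (simp add: Y_def)
  qed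
  have geq: "gmax (\<lambda>t. B t \<omega>) r s n = Y \<omega> + X \<omega> + u" if "\<omega> \<in> space M" for \<omega>
  proof -
    have "gmax (\<lambda>t. B t \<omega>) r s n = Max ((\<lambda>k. (B (g k) \<omega> - B r \<omega>) + B r \<omega>) ` {0..Suc n})"
      unfolding gmax_def g_def by simp
    also have "\<dots> = Y \<omega> + B r \<omega>" unfolding Yeq by (rule Max_add_commute) auto
    finally show ?thesis using BM_0[OF BM that] by (simp add: X_def)
  qed
  have "{\<omega>\<in>space M. gmax (\<lambda>t. B t \<omega>) r s n \<in> {\<gamma> - \<epsilon><..\<gamma>}}
      = {\<omega>\<in>space M. X \<omega> + Y \<omega> \<in> {(\<gamma> - u) - \<epsilon><..(\<gamma> - u)}}"
    using geq by auto
  also have "measure M \<dots> \<le> \<epsilon> / sqrt (2 * pi * (sqrt r)\<^sup>2)"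
    by (rule sum_indep_interval[OF indXY dX _ ep]) (use r in simp)
  finally show ?thesis using r by simp
qed

lemma gmax_meas:
  assumes "is_BM M u B"
  shows "(\<lambda>\<omega>. gmax (\<lambda>t. B t \<omega>) a b n) \<in> borel_measurable M"
proof -
  have [measurable]: "\<And>t. B t \<in> borel_measurable M" using BM_meas[OF assms] .
  show ?thesis unfolding gmax_def by measurable
qed

lemma supp_null_rs:
  assumes BM: "is_BM M u B" and r: "0 < r" "r < s"
  shows "measure M {\<omega>\<in>space M. supp (\<lambda>t. B t \<omega>) r s = \<gamma>} = 0"
proof -
  interpret prob_space M using BM_prob[OF BM] .
  define Z where "Z = {\<omega>\<in>space M. supp (\<lambda>t. B t \<omega>) r s = \<gamma>}"
  define K where "K = sqrt (2 * pi * r)"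
  have K: "K > 0" unfolding K_def using r by simp
  have bound: "measure M Z \<le> \<epsilon> / K" if ep: "\<epsilon> > 0" for \<epsilon>
  proof -
    have [measurable]: "\<And>n. (\<lambda>\<omega>. gmax (\<lambda>t. B t \<omega>) r s n) \<in> borel_measurable M"
      using gmax_meas[OF BM] .
    define A where "A n = {\<omega>\<in>space M. gmax (\<lambda>t. B t \<omega>) r s n \<in> {\<gamma> - \<epsilon><..\<gamma>}}" for n
    define D where "D N = {\<omega>\<in>space M. \<forall>n\<in>{N..}. gmax (\<lambda>t. B t \<omega>) r s n \<in> {\<gamma> - \<epsilon><..\<gamma>}}" for N
    have Dm: "D N \<in> sets M" for N unfolding D_def by measurable
    have Am: "A n \<in> sets M" for n unfolding A_def by measurable
    have inc: "incseq D" unfolding incseq_def D_def by auto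
    have DA: "measure M (D N) \<le> \<epsilon> / K" for N
    proof -
      have "measure M (D N) \<le> measure M (A N)"
        by (rule finite_measure_mono[OF _ Am]) (auto simp: D_def A_def)
      also have "\<dots> \<le> \<epsilon> / K" unfolding A_def K_def by (rule gmax_bound[OF BM r]) (use ep in simp)
      finally show ?thesis .
    qed
    have lim: "(\<lambda>N. measure M (D N)) \<longlonglongrightarrow> measure M (\<Union>N. D N)"
      by (rule finite_Lim_measure_incseq) (use Dm inc in auto)
    have U: "measure M (\<Union>N. D N) \<le> \<epsilon> / K"
      by (rule LIMSEQ_le_const2[OF lim]) (use DA in auto)
    have "Z \<subseteq> (\<Union>N. D N)"
    proof
      fix \<omega> assume "\<omega> \<in> Z"
      hence \<omega>: "\<omega> \<in> space M" "supp (\<lambda>t. B t \<omega>) r s = \<gamma>" unfolding Z_def by auto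
      have c: "continuous_on {r..s} (\<lambda>t. B t \<omega>)" using BM_cont'[OF BM \<omega>(1)] r by simp
      have t: "(\<lambda>n. gmax (\<lambda>t. B t \<omega>) r s n) \<longlonglongrightarrow> \<gamma>"
        using gmax_tendsto[OF r(2) c] \<omega> by simp
      have "eventually (\<lambda>n. \<gamma> - \<epsilon> < gmax (\<lambda>t. B t \<omega>) r s n) sequentially"
        by (rule order_tendstoD(1)[OF t]) (use ep in simp)
      then obtain N where N: "\<And>n. n \<ge> N \<Longrightarrow> \<gamma> - \<epsilon> < gmax (\<lambda>t. B t \<omega>) r s n"
        unfolding eventually_sequentially by blast
      have "\<And>n. gmax (\<lambda>t. B t \<omega>) r s n \<le> \<gamma>" using gmax_le_supp[OF _ c] r \<omega> by auto
      hence "\<omega> \<in> D N" using N \<omega> unfolding D_def by auto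
      thus "\<omega> \<in> (\<Union>N. D N)" by blast
    qed
    hence "measure M Z \<le> measure M (\<Union>N. D N)"
      by (intro finite_measure_mono) (use Dm in auto)
    thus ?thesis using U by simp
  qed
  have "measure M Z \<le> 0"
  proof (rule ccontr)
    assume "\<not> measure M Z \<le> 0"
    hence pos: "measure M Z > 0" by simp
    have "measure M Z \<le> (measure M Z * K / 2) / K" by (rule bound) (use pos K in simp)
    also have "\<dots> = measure M Z / 2" using K by simp
    finally show False using pos by simp
  qed
  thus ?thesis unfolding Z_def using measure_nonneg[of M] by (simp add: order_antisym)
qed

lemma supp_mono_right:
  assumes "0 \<le> b" "b \<le> b'" "continuous_on {0..b'} p"
  shows "supp p 0 b \<le> supp p 0 b'"
proof -
  obtain t where "t \<in> {0..b}" "supp p 0 b = p t"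
    using supp_attained[of 0 b p] assms continuous_on_subset[OF assms(3)] by force
  thus ?thesis using supp_upper[OF _ assms(3), of t] assms by auto
qed

lemma supp_null_0s:
  assumes BM: "is_BM M u B" and s: "0 < s" and g: "u < \<gamma>"
  shows "measure M {\<omega>\<in>space M. supp (\<lambda>t. B t \<omega>) 0 s = \<gamma>} = 0"
proof -
  interpret prob_space M using BM_prob[OF BM] .
  define Z where "Z = {\<omega>\<in>space M. supp (\<lambda>t. B t \<omega>) 0 s = \<gamma>}"
  define b where "b n = s / (real n + 2)" for n :: nat
  have b: "0 < b n" "b n < s" for n
  proof -
    have "s / (real n + 2) < s / 1" using s by (intro divide_strict_left_mono) auto
    thus "0 < b n" "b n < s" unfolding b_def using s by auto
  qed
  define W where "W n = {\<omega>\<in>space M. \<gamma> \<le> supp (\<lambda>t. B t \<omega>) 0 (b n)}" for n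
  have Wm: "W n \<in> sets M" for n
  proof -
    have [measurable]: "(\<lambda>\<omega>. supp (\<lambda>t. B t \<omega>) 0 (b n)) \<in> borel_measurable M"
      using supp_meas[OF BM, of 0 "b n"] b[of n] by simp
    show ?thesis unfolding W_def by measurable
  qed
  have dec: "decseq W"
    unfolding decseq_def
  proof (intro allI impI subsetI)
    fix m n \<omega> assume mn: "m \<le> n" and w: "\<omega> \<in> W n"
    have "b n \<le> b m" unfolding b_def using s mn by (auto simp: field_simps intro!: mult_left_mono)
    moreover have om: "\<omega> \<in> space M" using w unfolding W_def by auto
    ultimately have "supp (\<lambda>t. B t \<omega>) 0 (b n) \<le> supp (\<lambda>t. B t \<omega>) 0 (b m)"
      using supp_mono_right[OF less_imp_le[OF b(1)[of n]] _ BM_cont'[OF BM om order_refl]] by blast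
    thus "\<omega> \<in> W m" using w unfolding W_def by auto
  qed
  have empty: "(\<Inter>n. W n) = {}"
  proof (rule ccontr)
    assume "(\<Inter>n. W n) \<noteq> {}"
    then obtain \<omega> where w: "\<And>n. \<omega> \<in> W n" by blast
    hence \<omega>: "\<omega> \<in> space M" unfolding W_def by auto
    have c: "continuous_on {0..} (\<lambda>t. B t \<omega>)" using BM_cont[OF BM \<omega>] .
    have "\<exists>t. t \<in> {0..b n} \<and> supp (\<lambda>t. B t \<omega>) 0 (b n) = B t \<omega>" for n
      using supp_attained[OF _ BM_cont'[OF BM \<omega> order_refl], of "b n"] b[of n] by force
    then obtain t where t: "\<And>n. t n \<in> {0..b n}" "\<And>n. supp (\<lambda>t. B t \<omega>) 0 (b n) = B (t n) \<omega>"
      by metis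
    have bt: "b \<longlonglongrightarrow> 0"
    proof -
      have "(\<lambda>n. s / real (Suc (Suc n))) \<longlonglongrightarrow> 0"
        using LIMSEQ_Suc[OF LIMSEQ_Suc[OF lim_const_over_n[of s]]] by simp
      moreover have "b = (\<lambda>n. s / real (Suc (Suc n)))" unfolding b_def by (auto simp: add.commute)
      ultimately show ?thesis by simp
    qed
    have tt: "t \<longlonglongrightarrow> 0"
      by (rule real_tendsto_sandwich[where f="\<lambda>_. 0" and h=b]) (use t bt in auto)
    have "(\<lambda>n. B (t n) \<omega>) \<longlonglongrightarrow> B 0 \<omega>"
      by (rule continuous_on_tendsto_compose[OF c tt]) (use t in auto)
    hence "(\<lambda>n. B (t n) \<omega>) \<longlonglongrightarrow> u" using BM_0[OF BM \<omega>] by simp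
    hence "eventually (\<lambda>n. B (t n) \<omega> < \<gamma>) sequentially" by (rule order_tendstoD(2)) (use g in simp)
    then obtain n where "B (t n) \<omega> < \<gamma>" by (auto simp: eventually_sequentially)
    with w[of n] t(2)[of n] show False unfolding W_def by auto
  qed
  have limW: "(\<lambda>n. measure M (W n)) \<longlonglongrightarrow> 0"
    using finite_Lim_measure_decseq[of W] Wm dec empty by auto
  have ZW: "measure M Z \<le> measure M (W n)" for n
  proof -
    define Z2 where "Z2 = {\<omega>\<in>space M. supp (\<lambda>t. B t \<omega>) (b n) s = \<gamma>}"
    have Z2m: "Z2 \<in> sets M"
    proof -
      have [measurable]: "(\<lambda>\<omega>. supp (\<lambda>t. B t \<omega>) (b n) s) \<in> borel_measurable M"
        using supp_meas[OF BM, of "b n" s] b[of n] by simp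
      show ?thesis unfolding Z2_def by measurable
    qed
    have Z20: "measure M Z2 = 0" unfolding Z2_def by (rule supp_null_rs[OF BM b(1) b(2)])
    have "Z \<subseteq> W n \<union> Z2"
    proof
      fix \<omega> assume "\<omega> \<in> Z"
      hence \<omega>: "\<omega> \<in> space M" "supp (\<lambda>t. B t \<omega>) 0 s = \<gamma>" unfolding Z_def by auto
      have c: "continuous_on {0..s} (\<lambda>t. B t \<omega>)" using BM_cont'[OF BM \<omega>(1) order_refl] .
      obtain t where t: "t \<in> {0..s}" "supp (\<lambda>t. B t \<omega>) 0 s = B t \<omega>"
        using supp_attained[OF _ c] s by force
      show "\<omega> \<in> W n \<union> Z2"
      proof (cases "t \<le> b n")
        case True
        have "B t \<omega> \<le> supp (\<lambda>t. B t \<omega>) 0 (b n)"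
          by (rule supp_upper[OF _ BM_cont'[OF BM \<omega>(1) order_refl]]) (use True t b[of n] in auto)
        thus ?thesis using \<omega> t unfolding W_def by auto
      next
        case False
        have c2: "continuous_on {b n..s} (\<lambda>t. B t \<omega>)"
          using BM_cont'[OF BM \<omega>(1)] b[of n] by (simp add: less_imp_le)
        have "B t \<omega> \<le> supp (\<lambda>t. B t \<omega>) (b n) s"
          by (rule supp_upper[OF _ c2]) (use False t b[of n] in auto)
        moreover obtain t' where t': "t' \<in> {b n..s}" "supp (\<lambda>t. B t \<omega>) (b n) s = B t' \<omega>"
          using supp_attained[OF _ c2] b[of n] by force
        moreover have "B t' \<omega> \<le> supp (\<lambda>t. B t \<omega>) 0 s"
          by (rule supp_upper[OF _ c]) (use t' b[of n] in auto)
        ultimately have "supp (\<lambda>t. B t \<omega>) (b n) s = \<gamma>" using \<omega> t by auto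
        thus ?thesis using \<omega> unfolding Z2_def by auto
      qed
    qed
    hence "measure M Z \<le> measure M (W n \<union> Z2)"
      by (intro finite_measure_mono) (use Wm Z2m in auto)
    also have "\<dots> \<le> measure M (W n) + measure M Z2"
      by (rule measure_subadditive) (use Wm Z2m in \<open>auto simp: emeasure_eq_measure\<close>)
    finally show ?thesis using Z20 by simp
  qed
  have "measure M Z \<le> 0"
    by (rule LIMSEQ_le_const[OF limW]) (use ZW in auto)
  thus ?thesis unfolding Z_def using measure_nonneg[of M] by (simp add: order_antisym)
qed

lemma seg_const:
  fixes f :: "real \<Rightarrow> real"
  assumes loc: "\<forall>x. x \<notin> S \<longrightarrow> (\<exists>e>0. \<forall>y. \<bar>y - x\<bar> < e \<longrightarrow> f y = f x)"
    and dis: "{min x z..max x z} \<inter> S = {}"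
  shows "f x = f z"
proof (rule connected_local_const[where A="{min x z..max x z}" and f=f and a=x and b=z])
  show "connected {min x z..max x z}" by simp
  show "x \<in> {min x z..max x z}" "z \<in> {min x z..max x z}" by auto
  show "\<forall>a\<in>{min x z..max x z}. eventually (\<lambda>b. f a = f b) (at a within {min x z..max x z})"
  proof
    fix a assume "a \<in> {min x z..max x z}"
    hence "a \<notin> S" using dis by auto
    then obtain e where e: "e > 0" "\<And>y. \<bar>y - a\<bar> < e \<Longrightarrow> f y = f a" using loc by blast
    show "eventually (\<lambda>b. f a = f b) (at a within {min x z..max x z})"
      unfolding eventually_at
    proof (intro exI[of _ e] conjI ballI impI)
      fix b assume "b \<noteq> a \<and> dist b a < e"
      hence "\<bar>b - a\<bar> < e" by (simp add: dist_real_def)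
      thus "f a = f b" using e(2)[of b] by simp
    qed (rule e(1))
  qed
qed

lemma step_finite_range:
  assumes "step_fun f"
  shows "finite (range f)"
proof -
  obtain S where S: "finite S" "\<forall>x. x \<notin> S \<longrightarrow> (\<exists>e>0. \<forall>y. \<bar>y - x\<bar> < e \<longrightarrow> f y = f x)"
    using assms unfolding step_fun_def by blast
  define R where "R = (\<lambda>(a, b). (a + b) / 2) ` (S \<times> S) \<union> (\<lambda>a. a + 1) ` S \<union> (\<lambda>a. a - 1) ` S \<union> {0}"
  have Rf: "finite R" unfolding R_def using S(1) by auto
  have R0: "0 \<in> R" unfolding R_def by blast
  have R1: "a + 1 \<in> R" if "a \<in> S" for a
    unfolding R_def using imageI[OF that, of "\<lambda>a. a + 1"] by blast
  have R2: "a - 1 \<in> R" if "a \<in> S" for a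
    unfolding R_def using imageI[OF that, of "\<lambda>a. a - 1"] by blast
  have R3: "(a + b) / 2 \<in> R" if "a \<in> S" "b \<in> S" for a b
  proof -
    have "(a, b) \<in> S \<times> S" using that by blast
    from imageI[OF this, of "\<lambda>(a, b). (a + b) / 2"] 
    have "(a + b) / 2 \<in> (\<lambda>(a, b). (a + b) / 2) ` (S \<times> S)" by simp
    thus ?thesis unfolding R_def by blast
  qed
  have key: "\<exists>z\<in>R. f x = f z" if x: "x \<notin> S" for x
  proof -
    define L where "L = {s\<in>S. s < x}"
    define H where "H = {s\<in>S. x < s}"
    have Lf: "finite L" "L \<subseteq> S" and Hf: "finite H" "H \<subseteq> S" using S(1) unfolding L_def H_def by auto
    define P where "P w \<longleftrightarrow> (L \<noteq> {} \<longrightarrow> Max L < w) \<and> (H \<noteq> {} \<longrightarrow> w < Min H)" for w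
    have Px: "P x" unfolding P_def
    proof (intro conjI impI)
      assume "L \<noteq> {}" thus "Max L < x" using Lf(1) by (subst Max_less_iff) (auto simp: L_def)
    next
      assume "H \<noteq> {}" thus "x < Min H" using Hf(1) by (subst Min_gr_iff) (auto simp: H_def)
    qed
    have notS: "w \<notin> S" if "P w" for w
    proof
      assume w: "w \<in> S"
      have "w \<noteq> x" using x w by auto
      hence "w < x \<or> x < w" by auto
      thus False
      proof
        assume "w < x" hence "w \<in> L" using w unfolding L_def by auto
        hence "w \<le> Max L" "L \<noteq> {}" using Lf by auto
        thus False using \<open>P w\<close> unfolding P_def by auto
      next
        assume "x < w" hence "w \<in> H" using w unfolding H_def by auto
        hence "Min H \<le> w" "H \<noteq> {}" using Hf by auto
        thus False using \<open>P w\<close> unfolding P_def by auto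
      qed
    qed
    have conv: "P w" if "P a" "P b" "min a b \<le> w" "w \<le> max a b" for a b w
    proof -
      have h: "L \<noteq> {} \<Longrightarrow> Max L < a" "L \<noteq> {} \<Longrightarrow> Max L < b"
        "H \<noteq> {} \<Longrightarrow> a < Min H" "H \<noteq> {} \<Longrightarrow> b < Min H"
        using that(1,2) unfolding P_def by simp_all
      show ?thesis unfolding P_def
      proof (intro conjI impI)
        assume "L \<noteq> {}" thus "Max L < w" using h(1,2) that(3) by linarith
      next
        assume "H \<noteq> {}" thus "w < Min H" using h(3,4) that(4) by linarith
      qed
    qed
    obtain z where z: "z \<in> R" "P z"
    proof (cases "L = {}"; cases "H = {}")
      assume "L = {}" "H = {}" 
      hence "P 0" unfolding P_def by blast
      thus ?thesis using that[OF R0] by blast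
    next
      assume LH: "L = {}" "H \<noteq> {}"
      have "Min H \<in> S" using Hf(2) Min_in[OF Hf(1) LH(2)] by blast
      hence "Min H - 1 \<in> R" by (rule R2)
      moreover have "P (Min H - 1)" unfolding P_def using LH by (intro conjI impI) linarith+
      ultimately show ?thesis using that by blast
    next
      assume LH: "L \<noteq> {}" "H = {}"
      have "Max L \<in> S" using Lf(2) Max_in[OF Lf(1) LH(1)] by blast
      hence "Max L + 1 \<in> R" by (rule R1)
      moreover have "P (Max L + 1)" unfolding P_def using LH by (intro conjI impI) linarith+
      ultimately show ?thesis using that by blast
    next
      assume LH: "L \<noteq> {}" "H \<noteq> {}"
      have "Max L \<in> S" using Lf(2) Max_in[OF Lf(1) LH(1)] by blast
      moreover have "Min H \<in> S" using Hf(2) Min_in[OF Hf(1) LH(2)] by blast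
      ultimately have "(Max L + Min H) / 2 \<in> R" by (rule R3)
      moreover have "Max L < Min H" using Px LH unfolding P_def by (metis less_trans)
      hence "P ((Max L + Min H) / 2)" unfolding P_def by (intro conjI impI) (simp_all add: field_simps)
      ultimately show ?thesis using that by blast
    qed
    have "{min x z..max x z} \<inter> S = {}"
    proof (rule ccontr)
      assume "{min x z..max x z} \<inter> S \<noteq> {}"
      then obtain w where w: "w \<in> S" "min x z \<le> w" "w \<le> max x z" by auto
      have "P w" by (rule conv[OF Px z(2)]) (use w in auto)
      thus False using notS w(1) by blast
    qed
    hence "f x = f z" by (rule seg_const[OF S(2)])
    thus ?thesis using z(1) by blast
  qed
  have "range f \<subseteq> f ` S \<union> f ` R"
  proof
    fix v assume "v \<in> range f"
    then obtain x where v: "v = f x" by blast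
    show "v \<in> f ` S \<union> f ` R"
    proof (cases "x \<in> S")
      case True thus ?thesis using v by blast
    next
      case False
      then obtain z where "z \<in> R" "f x = f z" using key by blast
      thus ?thesis using v by blast
    qed
  qed
  moreover have "finite (f ` S \<union> f ` R)" using S(1) Rf by blast
  ultimately show ?thesis by (rule finite_subset)
qed

lemma classC_props:
  assumes "class_C \<xi> f"
  shows "\<And>x. f x \<le> \<xi>" "\<And>x. 0 \<le> f x" "antimono_on {..0} f" "mono_on {0..} f"
  using assms unfolding class_C_def by auto

lemma sublevel_interval:
  assumes "class_C \<xi> f"
  shows "is_interval {x. f x < y}"
  unfolding is_interval_1
proof (intro ballI allI impI)
  fix a b x assume a: "a \<in> {x. f x < y}" and b: "b \<in> {x. f x < y}" and x: "a \<le> x \<and> x \<le> b"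
  show "x \<in> {x. f x < y}"
  proof (cases "0 \<le> x")
    case True
    hence "f x \<le> f b" using classC_props(4)[OF assms] x by (auto simp: mono_on_def)
    thus ?thesis using b by auto
  next
    case False
    hence "f x \<le> f a" using classC_props(3)[OF assms] x by (auto simp: monotone_on_def)
    thus ?thesis using a by auto
  qed
qed

lemma cont_ball:
  fixes f :: "real \<Rightarrow> real"
  assumes "isCont f u" "f u < y"
  shows "\<exists>e>0. \<forall>x. \<bar>x - u\<bar> < e \<longrightarrow> f x < y"
proof -
  have "eventually (\<lambda>x. x \<noteq> u \<longrightarrow> f x < y) (nhds u)"
    using order_tendstoD(2)[OF assms(1)[unfolded continuous_at] assms(2)]
    by (simp add: eventually_at_filter)
  hence "eventually (\<lambda>x. f x < y) (nhds u)"
    by (rule eventually_mono) (use assms(2) in auto)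
  thus ?thesis unfolding eventually_nhds_metric dist_real_def by blast
qed

lemma fp_eq_Max:
  assumes fin: "finite (range f)" and d: "0 \<le> \<delta>"
  shows "fplus f \<delta> x = Max (f ` {x - \<delta>..x + \<delta>})" "finite (f ` {x - \<delta>..x + \<delta>})"
    "f ` {x - \<delta>..x + \<delta>} \<noteq> {}"
proof -
  show f1: "finite (f ` {x - \<delta>..x + \<delta>})" by (rule finite_subset[OF _ fin]) auto
  show f2: "f ` {x - \<delta>..x + \<delta>} \<noteq> {}" using d by auto
  show "fplus f \<delta> x = Max (f ` {x - \<delta>..x + \<delta>})"
    unfolding fplus_def by (rule cSup_eq_Max[OF f1 f2])
qed

lemma fp_in:
  assumes "finite (range f)" "0 \<le> \<delta>"
  shows "fplus f \<delta> x \<in> range f"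
proof -
  have "Max (f ` {x - \<delta>..x + \<delta>}) \<in> f ` {x - \<delta>..x + \<delta>}"
    by (rule Max_in[OF fp_eq_Max(2,3)[OF assms]])
  thus ?thesis unfolding fp_eq_Max(1)[OF assms] by blast
qed

lemma fp_less:
  assumes "finite (range f)" "0 \<le> \<delta>"
  shows "fplus f \<delta> x < y \<longleftrightarrow> (\<forall>w\<in>{x - \<delta>..x + \<delta>}. f w < y)"
  unfolding fp_eq_Max(1)[OF assms] using Max_less_iff[OF fp_eq_Max(2,3)[OF assms]] by auto

lemma fp_ge:
  assumes "finite (range f)" "0 \<le> \<delta>"
  shows "f x \<le> fplus f \<delta> x"
  unfolding fp_eq_Max(1)[OF assms] using fp_eq_Max(2)[OF assms] assms(2) by (intro Max_ge) auto

lemma fp_mono: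
  assumes "finite (range f)" "0 \<le> \<delta>" "\<delta> \<le> \<delta>'"
  shows "fplus f \<delta> x \<le> fplus f \<delta>' x"
proof -
  have d': "0 \<le> \<delta>'" using assms by simp
  show ?thesis
    unfolding fp_eq_Max(1)[OF assms(1,2)] fp_eq_Max(1)[OF assms(1) d'] using assms
    by (intro Max_mono fp_eq_Max(2,3)) auto
qed

lemma fp_interval:
  assumes "finite (range f)" "0 \<le> \<delta>" "is_interval {x. f x < y}"
  shows "is_interval {x. fplus f \<delta> x < y}"
proof -
  have eq: "{x. fplus f \<delta> x < y} = {x. \<forall>w\<in>{x - \<delta>..x + \<delta>}. f w < y}"
    using fp_less[OF assms(1,2)] by blast
  show ?thesis unfolding eq is_interval_1
  proof (intro ballI allI impI)
    fix a b x w
    assume a: "a \<in> {x. \<forall>w\<in>{x - \<delta>..x + \<delta>}. f w < y}" and b: "b \<in> {x. \<forall>w\<in>{x - \<delta>..x + \<delta>}. f w < y}"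
      and x: "a \<le> x \<and> x \<le> b"
    show "x \<in> {x. \<forall>w\<in>{x - \<delta>..x + \<delta>}. f w < y}"
    proof (intro CollectI ballI)
      fix w assume w: "w \<in> {x - \<delta>..x + \<delta>}"
      have "f (w - x + a) < y" using a w by auto
      moreover have "f (w - x + b) < y" using b w by auto
      moreover have "w - x + a \<le> w" "w \<le> w - x + b" using x by auto
      ultimately show "f w < y"
        using assms(3)[unfolded is_interval_1, rule_format, of "w - x + a" "w - x + b" w] by auto
    qed
  qed
qed

lemma path_interval:
  fixes p :: "real \<Rightarrow> real"
  assumes U: "is_interval U" and a: "0 < a" and c: "continuous_on {0..a} p"
    and stay: "\<forall>t\<in>{0..<a}. p t \<in> U"
    and up: "bdd_above U \<Longrightarrow> supp p 0 a \<noteq> Sup U"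
    and lo: "bdd_below U \<Longrightarrow> supp (\<lambda>t. - p t) 0 a \<noteq> - Inf U"
  shows "\<exists>\<delta>>0. \<forall>t\<in>{0..<a}. \<forall>x. \<bar>x - p t\<bar> \<le> \<delta> \<longrightarrow> x \<in> U"
proof -
  have Une: "U \<noteq> {}" using stay a by auto
  have c': "continuous_on {0..a} (\<lambda>t. - p t)" using c by (intro continuous_on_minus)
  define Mx where "Mx = supp p 0 a"
  define Mn where "Mn = supp (\<lambda>t. - p t) 0 a"
  have bnd: "p t \<le> Mx" "- p t \<le> Mn" if "t \<in> {0..a}" for t
    unfolding Mx_def Mn_def using supp_upper[OF _ c that] supp_upper[OF _ c' that] a by auto
  have cl: "closure {0..<a} = {0..a}" using a by simp
  obtain d1 where d1: "d1 > 0" "\<And>x. x \<le> Mx + d1 \<Longrightarrow> \<exists>b\<in>U. x \<le> b"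
  proof (cases "bdd_above U")
    case True
    obtain t where t: "t \<in> {0..a}" "Mx = p t" using supp_attained[OF _ c] a unfolding Mx_def by force
    have "p t \<le> Sup U"
      by (rule continuous_le_on_closure[where S="{0..<a}"]) (use c cl t stay True in \<open>auto intro: cSup_upper\<close>)
    hence lt: "Mx < Sup U" using up[OF True] t unfolding Mx_def by auto
    show ?thesis
    proof (rule that[of "(Sup U - Mx) / 2"])
      show "(Sup U - Mx) / 2 > 0" using lt by simp
      fix x assume "x \<le> Mx + (Sup U - Mx) / 2"
      moreover have "(Sup U - Mx) / 2 < Sup U - Mx" using lt by simp
      ultimately have "x < Sup U" by linarith
      thus "\<exists>b\<in>U. x \<le> b" using less_cSup_iff[OF Une True] by (auto intro: less_imp_le)
    qed
  next
    case False
    show ?thesis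
    proof (rule that[of 1])
      fix x show "\<exists>b\<in>U. x \<le> b" using False unfolding bdd_above_def by (meson linear)
    qed simp
  qed
  obtain d2 where d2: "d2 > 0" "\<And>x. - x \<le> Mn + d2 \<Longrightarrow> \<exists>b\<in>U. b \<le> x"
  proof (cases "bdd_below U")
    case True
    obtain t where t: "t \<in> {0..a}" "Mn = - p t" using supp_attained[OF _ c'] a unfolding Mn_def by force
    have "- p t \<le> - Inf U"
      by (rule continuous_le_on_closure[where S="{0..<a}" and f="\<lambda>t. - p t"])
         (use c' cl t stay True in \<open>auto intro: cInf_lower\<close>)
    hence lt: "Mn < - Inf U" using lo[OF True] t unfolding Mn_def by auto
    show ?thesis
    proof (rule that[of "(- Inf U - Mn) / 2"])
      show "(- Inf U - Mn) / 2 > 0" using lt by simp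
      fix x assume "- x \<le> Mn + (- Inf U - Mn) / 2"
      moreover have "(- Inf U - Mn) / 2 < - Inf U - Mn" using lt by simp
      ultimately have "Inf U < x" by linarith
      thus "\<exists>b\<in>U. b \<le> x" using cInf_less_iff[OF Une True] by (auto intro: less_imp_le)
    qed
  next
    case False
    show ?thesis
    proof (rule that[of 1])
      fix x show "\<exists>b\<in>U. b \<le> x" using False unfolding bdd_below_def by (meson linear)
    qed simp
  qed
  show ?thesis
  proof (intro exI[of _ "min d1 d2"] conjI ballI allI impI)
    show "min d1 d2 > 0" using d1 d2 by simp
    fix t x assume t: "t \<in> {0..<a}" and x: "\<bar>x - p t\<bar> \<le> min d1 d2"
    have "p t \<le> Mx" "- p t \<le> Mn" using bnd[of t] t by auto
    hence "x \<le> Mx + d1" "- x \<le> Mn + d2" using x by auto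
    then obtain b1 b2 where "b1 \<in> U" "b2 \<in> U" "b1 \<le> x" "x \<le> b2" using d1 d2 by blast
    thus "x \<in> U" using U unfolding is_interval_1 by blast
  qed
qed

lemma hit_char:
  "(\<forall>v. hitting_time B v \<omega> \<ge> ereal (g v - c)) \<longleftrightarrow> (\<forall>t\<ge>0. g (B t \<omega>) \<le> t + c)"
  unfolding hitting_time_def le_INF_iff by auto

lemma ev_char:
  fixes g p :: "real \<Rightarrow> real" and c :: real
  assumes "\<And>x. g x \<in> V"
  shows "(\<forall>t\<ge>0. g (p t) \<le> t + c) \<longleftrightarrow> (\<forall>y\<in>V. c < y \<longrightarrow> (\<forall>t\<in>{0..<y - c}. p t \<in> {x. g x < y}))"
proof
  assume h: "\<forall>t\<ge>0. g (p t) \<le> t + c"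
  show "\<forall>y\<in>V. c < y \<longrightarrow> (\<forall>t\<in>{0..<y - c}. p t \<in> {x. g x < y})"
  proof (intro ballI impI)
    fix y t assume "t \<in> {0..<y - c}"
    hence "0 \<le> t" "t + c < y" by auto
    thus "p t \<in> {x. g x < y}" using h by force
  qed
next
  assume h: "\<forall>y\<in>V. c < y \<longrightarrow> (\<forall>t\<in>{0..<y - c}. p t \<in> {x. g x < y})"
  show "\<forall>t\<ge>0. g (p t) \<le> t + c"
  proof (intro allI impI)
    fix t :: real assume t: "0 \<le> t"
    show "g (p t) \<le> t + c"
    proof (rule ccontr)
      assume "\<not> g (p t) \<le> t + c"
      hence "c < g (p t)" "t \<in> {0..<g (p t) - c}" using t by auto
      thus False using h assms[of "p t"] by fastforce
    qed
  qed
qed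

lemma stay_meas:
  assumes BM: "is_BM M u B" and U: "is_interval U" and a: "0 < a"
  shows "{\<omega>\<in>space M. \<forall>t\<in>{0..<a}. B t \<omega> \<in> U} \<in> sets M"
proof -
  define bn where "bn n = a * (real n + 1) / (real n + 2)" for n :: nat
  have bn: "0 < bn n" "bn n < a" for n
  proof -
    have "(real n + 1) / (real n + 2) < 1" by simp
    hence "a * ((real n + 1) / (real n + 2)) < a * 1" using a by (intro mult_strict_left_mono) auto
    moreover have "0 < a * ((real n + 1) / (real n + 2))" using a by simp
    ultimately show "0 < bn n" "bn n < a" unfolding bn_def by simp_all
  qed
  have BM': "is_BM M (-u) (\<lambda>t \<omega>. - B t \<omega>)" by (rule neg_BM[OF BM])
  have [measurable]: "(\<lambda>\<omega>. supp (\<lambda>t. B t \<omega>) 0 (bn n)) \<in> borel_measurable M" for n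
    using supp_meas[OF BM, of 0 "bn n"] bn[of n] by simp
  have [measurable]: "(\<lambda>\<omega>. supp (\<lambda>t. - B t \<omega>) 0 (bn n)) \<in> borel_measurable M" for n
    using supp_meas[OF BM', of 0 "bn n"] bn[of n] by simp
  have [measurable]: "U \<in> sets borel" by (rule real_interval_borel_measurable[OF U])
  have eq: "{\<omega>\<in>space M. \<forall>t\<in>{0..<a}. B t \<omega> \<in> U} =
    {\<omega>\<in>space M. \<forall>n. supp (\<lambda>t. B t \<omega>) 0 (bn n) \<in> U \<and> - supp (\<lambda>t. - B t \<omega>) 0 (bn n) \<in> U}"
  proof (intro Collect_cong conj_cong refl)
    fix \<omega> assume \<omega>: "\<omega> \<in> space M"
    have c: "continuous_on {0..b} (\<lambda>t. B t \<omega>)" for b using BM_cont'[OF BM \<omega> order_refl] .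
    have c': "continuous_on {0..b} (\<lambda>t. - B t \<omega>)" for b using c by (intro continuous_on_minus)
    show "(\<forall>t\<in>{0..<a}. B t \<omega> \<in> U) \<longleftrightarrow>
      (\<forall>n. supp (\<lambda>t. B t \<omega>) 0 (bn n) \<in> U \<and> - supp (\<lambda>t. - B t \<omega>) 0 (bn n) \<in> U)"
    proof
      assume h: "\<forall>t\<in>{0..<a}. B t \<omega> \<in> U"
      show "\<forall>n. supp (\<lambda>t. B t \<omega>) 0 (bn n) \<in> U \<and> - supp (\<lambda>t. - B t \<omega>) 0 (bn n) \<in> U"
      proof
        fix n
        have b0: "0 \<le> bn n" using bn(1)[of n] by (rule less_imp_le)
        obtain t where t: "t \<in> {0..bn n}" "supp (\<lambda>t. B t \<omega>) 0 (bn n) = B t \<omega>"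
          using supp_attained[OF b0 c] by blast
        obtain t' where t': "t' \<in> {0..bn n}" "supp (\<lambda>t. - B t \<omega>) 0 (bn n) = - B t' \<omega>"
          using supp_attained[OF b0 c'] by blast
        show "supp (\<lambda>t. B t \<omega>) 0 (bn n) \<in> U \<and> - supp (\<lambda>t. - B t \<omega>) 0 (bn n) \<in> U"
          using h t t' bn[of n] by auto
      qed
    next
      assume h: "\<forall>n. supp (\<lambda>t. B t \<omega>) 0 (bn n) \<in> U \<and> - supp (\<lambda>t. - B t \<omega>) 0 (bn n) \<in> U"
      show "\<forall>t\<in>{0..<a}. B t \<omega> \<in> U"
      proof
        fix t assume t: "t \<in> {0..<a}"
        obtain n where n: "t / (a - t) < real n" using reals_Archimedean2 by blast
        have "t < real n * (a - t)" using n t by (simp add: divide_less_eq)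
        hence "t \<le> (a - t) * real n" by (simp add: mult.commute)
        also have "\<dots> \<le> (a - t) * (real n + 1)" using t by (intro mult_left_mono) auto
        finally have "t * (real n + 2) \<le> a * (real n + 1)" by (simp add: algebra_simps)
        hence tb: "t \<le> bn n" unfolding bn_def by (simp add: pos_le_divide_eq)
        have "B t \<omega> \<le> supp (\<lambda>t. B t \<omega>) 0 (bn n)"
          by (rule supp_upper[OF _ c]) (use t tb bn[of n] in auto)
        moreover have "- B t \<omega> \<le> supp (\<lambda>t. - B t \<omega>) 0 (bn n)"
          by (rule supp_upper[OF _ c', of _ t]) (use t tb bn[of n] in auto)
        ultimately show "B t \<omega> \<in> U" using h[rule_format, of n] U unfolding is_interval_1
          by (metis minus_le_iff)
      qed
    qed
  qed
  show ?thesis unfolding eq by measurable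
qed

theorem lemma2p5:
  fixes \<xi> :: real and f :: "real \<Rightarrow> real" and u :: real
    and M :: "'a measure" and B :: "real \<Rightarrow> 'a \<Rightarrow> real"
  assumes "\<xi> > 0"
    and "class_C_step \<xi> f"
    and "u \<notin> {x. \<not> isCont f x}"
    and "is_BM M u B"
  shows "((\<lambda>\<delta>. measure M {\<omega>\<in>space M. \<forall>v. hitting_time B v \<omega> \<ge> ereal (fplus f \<delta> v - f u)})
           \<longlongrightarrow> measure M {\<omega>\<in>space M. \<forall>v. hitting_time B v \<omega> \<ge> ereal (f v - f u)})
         (at_right 0)"
proof -
  have BM: "is_BM M u B" by (rule assms(4))
  have BM': "is_BM M (-u) (\<lambda>t \<omega>. - B t \<omega>)" by (rule neg_BM[OF BM])
  interpret prob_space M using BM_prob[OF BM] .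
  have fC: "class_C \<xi> f" and step: "step_fun f" using assms(2) unfolding class_C_step_def by auto
  have ucont: "isCont f u" using assms(3) by simp
  define c where "c = f u"
  define V where "V = range f"
  have finV: "finite (range f)" by (rule step_finite_range[OF step])
  define U where "U y = {x. f x < y}" for y
  have Uint: "is_interval (U y)" for y unfolding U_def by (rule sublevel_interval[OF fC])
  define E where "E g = {\<omega>\<in>space M. \<forall>t\<ge>0. g (B t \<omega>) \<le> t + c}" for g :: "real \<Rightarrow> real"
  have set_eq: "{\<omega>\<in>space M. \<forall>v. hitting_time B v \<omega> \<ge> ereal (g v - f u)} = E g" for g
    unfolding E_def c_def using hit_char[of g "f u" B] by blast
  have Eeq: "E g = {\<omega>\<in>space M. \<forall>y\<in>V. c < y \<longrightarrow> (\<forall>t\<in>{0..<y - c}. B t \<omega> \<in> {x. g x < y})}"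
    if "\<And>x. g x \<in> V" for g
    unfolding E_def using ev_char[of g V "\<lambda>t. B t _" c, OF that] by blast
  have Emeas: "E g \<in> sets M" if gV: "\<And>x. g x \<in> V" and gI: "\<And>y. is_interval {x. g x < y}" for g
  proof -
    have p: "Measurable.pred M (\<lambda>\<omega>. c < y \<longrightarrow> (\<forall>t\<in>{0..<y - c}. B t \<omega> \<in> {x. g x < y}))" for y
    proof (cases "c < y")
      case True
      have "{\<omega>\<in>space M. \<forall>t\<in>{0..<y - c}. B t \<omega> \<in> {x. g x < y}} \<in> sets M"
        by (rule stay_meas[OF BM gI]) (use True in simp)
      thus ?thesis using True unfolding pred_def by simp
    next
      case False thus ?thesis by simp
    qed
    have "Measurable.pred M (\<lambda>\<omega>. \<forall>y\<in>V. c < y \<longrightarrow> (\<forall>t\<in>{0..<y - c}. B t \<omega> \<in> {x. g x < y}))"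
      by (rule pred_intros_finite(3)[OF finV[folded V_def]]) (rule p)
    thus ?thesis unfolding Eeq[OF gV] pred_def .
  qed
  have fV: "f x \<in> V" for x unfolding V_def by simp
  have fpV: "0 \<le> \<delta> \<Longrightarrow> fplus f \<delta> x \<in> V" for \<delta> x unfolding V_def by (rule fp_in[OF finV])
  have E0m: "E f \<in> sets M" by (rule Emeas[OF fV]) (rule sublevel_interval[OF fC])
  have Edm: "E (fplus f \<delta>) \<in> sets M" if d: "0 \<le> \<delta>" for \<delta>
    by (rule Emeas[OF fpV[OF d]]) (rule fp_interval[OF finV d sublevel_interval[OF fC]])
  have Esub: "E (fplus f \<delta>) \<subseteq> E f" if d: "0 \<le> \<delta>" for \<delta>
  proof
    fix \<omega> assume "\<omega> \<in> E (fplus f \<delta>)"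
    hence h: "\<omega> \<in> space M" "\<And>t. t \<ge> 0 \<Longrightarrow> fplus f \<delta> (B t \<omega>) \<le> t + c" unfolding E_def by auto
    have "\<And>t. t \<ge> 0 \<Longrightarrow> f (B t \<omega>) \<le> t + c" using h(2) fp_ge[OF finV d] by (meson order_trans)
    thus "\<omega> \<in> E f" using h(1) unfolding E_def by auto
  qed
  have Emono: "E (fplus f \<delta>') \<subseteq> E (fplus f \<delta>)" if d: "0 \<le> \<delta>" "\<delta> \<le> \<delta>'" for \<delta> \<delta>'
  proof
    fix \<omega> assume "\<omega> \<in> E (fplus f \<delta>')"
    hence h: "\<omega> \<in> space M" "\<And>t. t \<ge> 0 \<Longrightarrow> fplus f \<delta>' (B t \<omega>) \<le> t + c" unfolding E_def by auto
    have "\<And>t. t \<ge> 0 \<Longrightarrow> fplus f \<delta> (B t \<omega>) \<le> t + c" using h(2) fp_mono[OF finV d] by (meson order_trans)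
    thus "\<omega> \<in> E (fplus f \<delta>)" using h(1) unfolding E_def by auto
  qed
  define V' where "V' = {y\<in>V. c < y}"
  have finV': "finite V'" unfolding V'_def V_def using finV by simp
  define N1 where "N1 y = (if bdd_above (U y) then {\<omega>\<in>space M. supp (\<lambda>t. B t \<omega>) 0 (y - c) = Sup (U y)} else {})" for y
  define N2 where "N2 y = (if bdd_below (U y) then {\<omega>\<in>space M. supp (\<lambda>t. - B t \<omega>) 0 (y - c) = - Inf (U y)} else {})" for y
  define N where "N = (\<Union>y\<in>V'. N1 y \<union> N2 y)"
  have Nyy: "N1 y \<union> N2 y \<in> sets M \<and> measure M (N1 y \<union> N2 y) = 0" if y: "y \<in> V'" for y
  proof -
    have cy: "c < y" using y unfolding V'_def by simp
    obtain e where e: "e > 0" "\<And>x. \<bar>x - u\<bar> < e \<Longrightarrow> f x < y"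
      using cont_ball[OF ucont] cy unfolding c_def by blast
    have up: "u + e / 2 \<in> U y" and lo: "u - e / 2 \<in> U y" unfolding U_def using e by auto
    have [measurable]: "(\<lambda>\<omega>. supp (\<lambda>t. B t \<omega>) 0 (y - c)) \<in> borel_measurable M"
      using supp_meas[OF BM, of 0 "y - c"] cy by simp
    have [measurable]: "(\<lambda>\<omega>. supp (\<lambda>t. - B t \<omega>) 0 (y - c)) \<in> borel_measurable M"
      using supp_meas[OF BM', of 0 "y - c"] cy by simp
    have m1: "N1 y \<in> sets M" unfolding N1_def by (simp, measurable)
    have m2: "N2 y \<in> sets M" unfolding N2_def by (simp, measurable)
    have z1: "measure M (N1 y) = 0"
    proof (cases "bdd_above (U y)")
      case True
      have "u + e / 2 \<le> Sup (U y)" by (rule cSup_upper[OF up True])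
      hence "u < Sup (U y)" using e by simp
      thus ?thesis unfolding N1_def using True supp_null_0s[OF BM, of "y - c" "Sup (U y)"] cy by simp
    qed (simp add: N1_def)
    have z2: "measure M (N2 y) = 0"
    proof (cases "bdd_below (U y)")
      case True
      have "Inf (U y) \<le> u - e / 2" by (rule cInf_lower[OF lo True])
      hence "- u < - Inf (U y)" using e by simp
      thus ?thesis unfolding N2_def using True supp_null_0s[OF BM', of "y - c" "- Inf (U y)"] cy by simp
    qed (simp add: N2_def)
    have "measure M (N1 y \<union> N2 y) \<le> measure M (N1 y) + measure M (N2 y)"
      by (rule measure_subadditive) (use m1 m2 in \<open>auto simp: emeasure_eq_measure\<close>)
    thus ?thesis using z1 z2 m1 m2 measure_nonneg[of M "N1 y \<union> N2 y"] by auto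
  qed
  have Nm: "N \<in> sets M" unfolding N_def using Nyy finV' by auto
  have N0: "measure M N = 0"
  proof -
    have "measure M N \<le> (\<Sum>y\<in>V'. measure M (N1 y \<union> N2 y))"
      unfolding N_def by (rule finite_measure_subadditive_finite) (use finV' Nyy in auto)
    also have "\<dots> = 0" using Nyy by simp
    finally show ?thesis using measure_nonneg[of M N] by simp
  qed
  have key: "\<exists>\<delta>>0. \<omega> \<in> E (fplus f \<delta>)" if \<omega>: "\<omega> \<in> E f" "\<omega> \<notin> N" for \<omega>
  proof -
    have \<omega>s: "\<omega> \<in> space M" using \<omega> unfolding E_def by auto
    have stay: "\<forall>t\<in>{0..<y - c}. B t \<omega> \<in> U y" if "y \<in> V'" for y
      using \<omega>(1) that unfolding Eeq[OF fV] V'_def U_def by auto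
    have ex: "\<exists>d>0. \<forall>t\<in>{0..<y - c}. \<forall>x. \<bar>x - B t \<omega>\<bar> \<le> d \<longrightarrow> x \<in> U y" if y: "y \<in> V'" for y
    proof (rule path_interval[OF Uint])
      show "0 < y - c" using y unfolding V'_def by simp
      show "continuous_on {0..y - c} (\<lambda>t. B t \<omega>)" by (rule BM_cont'[OF BM \<omega>s order_refl])
      show "\<forall>t\<in>{0..<y - c}. B t \<omega> \<in> U y" by (rule stay[OF y])
      show "supp (\<lambda>t. B t \<omega>) 0 (y - c) \<noteq> Sup (U y)" if "bdd_above (U y)"
        using \<omega>(2) y that \<omega>s unfolding N_def N1_def by auto
      show "supp (\<lambda>t. - B t \<omega>) 0 (y - c) \<noteq> - Inf (U y)" if "bdd_below (U y)"
        using \<omega>(2) y that \<omega>s unfolding N_def N2_def by auto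
    qed
    then obtain dd where dd: "\<And>y. y \<in> V' \<Longrightarrow> dd y > 0 \<and> (\<forall>t\<in>{0..<y - c}. \<forall>x. \<bar>x - B t \<omega>\<bar> \<le> dd y \<longrightarrow> x \<in> U y)"
      by metis
    define \<delta> where "\<delta> = Min (insert 1 (dd ` V'))"
    have dfin: "finite (insert 1 (dd ` V'))" using finV' by simp
    have dpos: "\<delta> > 0" unfolding \<delta>_def using dfin dd by (subst Min_gr_iff) auto
    have dle: "\<delta> \<le> dd y" if "y \<in> V'" for y unfolding \<delta>_def using dfin that by (intro Min_le) auto
    have "\<omega> \<in> E (fplus f \<delta>)"
      unfolding Eeq[OF fpV[OF less_imp_le[OF dpos]]] mem_Collect_eq
    proof (intro conjI \<omega>s ballI impI)
      fix y t assume y: "y \<in> V" "c < y" and t: "t \<in> {0..<y - c}"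
      have yV': "y \<in> V'" using y unfolding V'_def by simp
      have "\<forall>w\<in>{B t \<omega> - \<delta>..B t \<omega> + \<delta>}. f w < y"
      proof
        fix w assume w: "w \<in> {B t \<omega> - \<delta>..B t \<omega> + \<delta>}"
        have "\<bar>w - B t \<omega>\<bar> \<le> dd y" using w dle[OF yV'] by auto
        thus "f w < y" using dd[OF yV'] t unfolding U_def by blast
      qed
      thus "fplus f \<delta> (B t \<omega>) < y"
        using fp_less[OF finV less_imp_le[OF dpos]] by simp
    qed
    thus ?thesis using dpos by blast
  qed
  define D where "D n = E (fplus f (1 / (real n + 1)))" for n :: nat
  have Dm: "D n \<in> sets M" for n unfolding D_def by (rule Edm) simp
  have Dinc: "incseq D" unfolding incseq_def D_def
    by (intro allI impI Emono) (auto simp: frac_le)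
  have limD: "(\<lambda>n. measure M (D n)) \<longlonglongrightarrow> measure M (\<Union>n. D n)"
    by (rule finite_Lim_measure_incseq) (use Dm Dinc in auto)
  have UD: "(\<Union>n. D n) \<in> sets M" using Dm by auto
  have UDsub: "(\<Union>n. D n) \<subseteq> E f"
  proof (rule UN_least)
    fix n show "D n \<subseteq> E f" unfolding D_def by (rule Esub) simp
  qed
  have Esub2: "E f \<subseteq> (\<Union>n. D n) \<union> N"
  proof
    fix \<omega> assume w: "\<omega> \<in> E f"
    show "\<omega> \<in> (\<Union>n. D n) \<union> N"
    proof (cases "\<omega> \<in> N")
      case False
      then obtain \<delta> where d: "\<delta> > 0" "\<omega> \<in> E (fplus f \<delta>)" using key w by blast
      obtain n where n: "1 / (real n + 1) < \<delta>"
        using reals_Archimedean[OF d(1)] by (auto simp: add.commute inverse_eq_divide)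
      have "E (fplus f \<delta>) \<subseteq> D n" unfolding D_def by (rule Emono) (use n in auto)
      thus ?thesis using d by auto
    qed simp
  qed
  have meq: "measure M (\<Union>n. D n) = measure M (E f)"
  proof (rule antisym)
    show "measure M (\<Union>n. D n) \<le> measure M (E f)" by (rule finite_measure_mono[OF UDsub E0m])
    have "measure M (E f) \<le> measure M ((\<Union>n. D n) \<union> N)"
      by (rule finite_measure_mono[OF Esub2]) (use UD Nm in auto)
    also have "\<dots> \<le> measure M (\<Union>n. D n) + measure M N"
      by (rule measure_subadditive) (use UD Nm in \<open>auto simp: emeasure_eq_measure\<close>)
    finally show "measure M (E f) \<le> measure M (\<Union>n. D n)" using N0 by simp
  qed
  have lim: "((\<lambda>\<delta>. measure M (E (fplus f \<delta>))) \<longlongrightarrow> measure M (E f)) (at_right 0)"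
  proof (rule order_tendstoI)
    fix a assume a: "a < measure M (E f)"
    hence "eventually (\<lambda>n. a < measure M (D n)) sequentially"
      using order_tendstoD(1)[OF limD] meq by simp
    then obtain n where n: "a < measure M (D n)" by (auto simp: eventually_sequentially)
    show "eventually (\<lambda>\<delta>. a < measure M (E (fplus f \<delta>))) (at_right 0)"
      unfolding eventually_at_right_field
    proof (intro exI[of _ "1 / (real n + 1)"] conjI allI impI)
      show "(0::real) < 1 / (real n + 1)" by simp
      fix \<delta> :: real assume d: "0 < \<delta>" "\<delta> < 1 / (real n + 1)"
      have "D n \<subseteq> E (fplus f \<delta>)" unfolding D_def by (rule Emono) (use d in auto)
      hence "measure M (D n) \<le> measure M (E (fplus f \<delta>))"
        by (rule finite_measure_mono) (rule Edm, use d in simp)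
      thus "a < measure M (E (fplus f \<delta>))" using n by simp
    qed
  next
    fix a assume a: "measure M (E f) < a"
    show "eventually (\<lambda>\<delta>. measure M (E (fplus f \<delta>)) < a) (at_right 0)"
      unfolding eventually_at_right_field
    proof (intro exI[of _ 1] conjI allI impI)
      fix \<delta> :: real assume d: "0 < \<delta>" "\<delta> < 1"
      have "measure M (E (fplus f \<delta>)) \<le> measure M (E f)"
        by (rule finite_measure_mono[OF Esub E0m]) (use d in simp)
      thus "measure M (E (fplus f \<delta>)) < a" using a by simp
    qed simp
  qed
  show ?thesis unfolding set_eq using lim .
qed

end
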